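(* A graph $3$-partition $\mathscr{G}=(G_{<},G_{=},G_{>},\sigma)$ with vertex set $L$ can be explained by a relaxed scenario if and only if, for every subset $L'\subseteq L$, the restriction $\mathscr{G}_{|L'}=(G_{<}[L'],G_{=}[L'],G_{>}[L'],\sigma_{|L'})$ can be explained by a relaxed scenario.
   Context: All trees are planted phylogenetic trees: a tree $T$ has a distinguished vertex $0_T$ of degree $1$ whose unique neighbor $\rho_T$ is the root, and every vertex other than $0_T$ and the leaves $L(T)$ has at least two children. For $x,y\in V(T)$ write $y\preceq_T x$ if $x$ lies on the path from $0_T$ to $y$; edges are written $uv$ with $v\prec_T u$. $\mathrm{lca}_T$ denotes the last common ancestor. A time map for $T$ is $\tau_T\colon V(T)\to\mathbb{R}$ with $\tau_T(x)<\tau_T(y)$ whenever $x\prec_T y$. A relaxed scenario $\mathscr{S}=(T,S,\sigma,\mu,\tau_T,\tau_S)$ consists of a gene tree $T$ with time map $\tau_T$, a species tree $S$ with time map $\tau_S$, a map $\sigma\colon L(T)\to M$ with $M\subseteq L(S)$, and a map $\mu\colon V(T)\to V(S)\cup E(S)$ such that (S0) $\mu(x)=0_S$ iff $x=0_T$; (S1) $\mu(x)\in L(S)$ iff $x\in L(T)$, in which case $\mu(x)=\sigma(x)$; (S2) if $\mu(x)\in V(S)$ then $\tau_S(\mu(x))=\tau_T(x)$; (S3) if $\mu(x)=uv\in E(S)$ then $\tau_S(v)<\tau_T(x)<\tau_S(u)$. The graphs $G_{=}(\mathscr{S})$, $G_{<}(\mathscr{S})$, $G_{>}(\mathscr{S})$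 have vertex set $L(T)$, and for distinct $x,y$ the pair $xy$ is an edge of $G_{=}(\mathscr{S})$, $G_{<}(\mathscr{S})$, resp. $G_{>}(\mathscr{S})$ iff $\tau_T(\mathrm{lca}_T(x,y))$ is $=$, $<$, resp. $>$ than $\tau_S(\mathrm{lca}_S(\sigma(x),\sigma(y)))$. A graph $3$-partition $\mathscr{G}=(G_{<},G_{=},G_{>},\sigma)$ is an ordered tuple of three edge-disjoint graphs on a common vertex set $L$ with coloring $\sigma\colon L\to M$ such that every unordered pair of distinct elements of $L$ is an edge of exactly one of them; it is explained by $\mathscr{S}$ (with the same $\sigma$) if $G_{<}=G_{<}(\mathscr{S})$, $G_{=}=G_{=}(\mathscr{S})$, $G_{>}=G_{>}(\mathscr{S})$. $G[L']$ denotes the induced subgraph. *)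

theory Defs
  imports Main "HOL.Real"
begin

text \<open>A rooted tree is given by a vertex set V, a set E of directed edges (u,v)
  with v a child of u, and the planted vertex r0 (called 0_T in the paper).\<close>

definition children :: "('v \<times> 'v) set \<Rightarrow> 'v \<Rightarrow> 'v set" where
  "children E v = {w. (v, w) \<in> E}"

definition planted_phylo_tree :: "'v set \<Rightarrow> ('v \<times> 'v) set \<Rightarrow> 'v \<Rightarrow> bool" where
  "planted_phylo_tree V E r0 \<longleftrightarrow>
     finite V \<and> r0 \<in> V \<and> E \<subseteq> V \<times> V \<and>
     (\<forall>u. (u, r0) \<notin> E) \<and>
     (\<forall>v\<in>V. v \<noteq> r0 \<longrightarrow> (\<exists>!u. (u, v) \<in> E)) \<and>
     (\<forall>v\<in>V. (r0, v) \<in> E\<^sup>*) \<and>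
     card (children E r0) = 1 \<and>
     (\<forall>v\<in>V. v \<noteq> r0 \<longrightarrow> children E v \<noteq> {} \<longrightarrow> card (children E v) \<ge> 2)"

definition tree_leaves :: "'v set \<Rightarrow> ('v \<times> 'v) set \<Rightarrow> 'v \<Rightarrow> 'v set" where
  "tree_leaves V E r0 = {v \<in> V. v \<noteq> r0 \<and> children E v = {}}"

text \<open>y \<preceq> x  iff  (x, y) \<in> E^*;  lca = the \<preceq>-least common ancestor.\<close>

definition is_lca :: "'v set \<Rightarrow> ('v \<times> 'v) set \<Rightarrow> 'v \<Rightarrow> 'v \<Rightarrow> 'v \<Rightarrow> bool" where
  "is_lca V E x y z \<longleftrightarrow> z \<in> V \<and> (z, x) \<in> E\<^sup>* \<and> (z, y) \<in> E\<^sup>* \<and>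
     (\<forall>w\<in>V. (w, x) \<in> E\<^sup>* \<and> (w, y) \<in> E\<^sup>* \<longrightarrow> (w, z) \<in> E\<^sup>*)"

definition lca :: "'v set \<Rightarrow> ('v \<times> 'v) set \<Rightarrow> 'v \<Rightarrow> 'v \<Rightarrow> 'v" where
  "lca V E x y = (THE z. is_lca V E x y z)"

definition time_map :: "'v set \<Rightarrow> ('v \<times> 'v) set \<Rightarrow> ('v \<Rightarrow> real) \<Rightarrow> bool" where
  "time_map V E \<tau> \<longleftrightarrow> (\<forall>x\<in>V. \<forall>y\<in>V. (y, x) \<in> E\<^sup>+ \<longrightarrow> \<tau> x < \<tau> y)"

text \<open>Relaxed scenario (T, S, sigma, mu, tauT, tauS); mu maps into V(S) (Inl) or E(S) (Inr).\<close>

definition relaxed_scenario ::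
  "'u set \<Rightarrow> ('u \<times> 'u) set \<Rightarrow> 'u \<Rightarrow> 'w set \<Rightarrow> ('w \<times> 'w) set \<Rightarrow> 'w \<Rightarrow>
   ('u \<Rightarrow> 'w) \<Rightarrow> ('u \<Rightarrow> 'w + ('w \<times> 'w)) \<Rightarrow> ('u \<Rightarrow> real) \<Rightarrow> ('w \<Rightarrow> real) \<Rightarrow> bool" where
  "relaxed_scenario VT ET rT VS ES rS \<sigma> \<mu> \<tau>T \<tau>S \<longleftrightarrow>
     planted_phylo_tree VT ET rT \<and> planted_phylo_tree VS ES rS \<and>
     time_map VT ET \<tau>T \<and> time_map VS ES \<tau>S \<and>
     (\<forall>x\<in>tree_leaves VT ET rT. \<sigma> x \<in> tree_leaves VS ES rS) \<and>
     (\<forall>x\<in>VT. \<mu> x \<in> Inl ` VS \<union> Inr ` ES) \<and>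
     (\<forall>x\<in>VT. \<mu> x = Inl rS \<longleftrightarrow> x = rT) \<and>
     (\<forall>x\<in>VT. \<mu> x \<in> Inl ` tree_leaves VS ES rS \<longleftrightarrow> x \<in> tree_leaves VT ET rT) \<and>
     (\<forall>x\<in>tree_leaves VT ET rT. \<mu> x = Inl (\<sigma> x)) \<and>
     (\<forall>x\<in>VT. \<forall>v. \<mu> x = Inl v \<longrightarrow> \<tau>S v = \<tau>T x) \<and>
     (\<forall>x\<in>VT. \<forall>u v. \<mu> x = Inr (u, v) \<longrightarrow> \<tau>S v < \<tau>T x \<and> \<tau>T x < \<tau>S u)"

text \<open>Graphs on a vertex set L are given by their edge sets (sets of 2-element subsets of L).\<close>

definition all_pairs :: "'a set \<Rightarrow> 'a set set" where
  "all_pairs L = {{x, y} | x y. x \<in> L \<and> y \<in> L \<and> x \<noteq> y}"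

definition graph_3_partition :: "'a set \<Rightarrow> 'a set set \<Rightarrow> 'a set set \<Rightarrow> 'a set set \<Rightarrow> bool" where
  "graph_3_partition L Glt Geq Ggt \<longleftrightarrow>
     Glt \<subseteq> all_pairs L \<and> Geq \<subseteq> all_pairs L \<and> Ggt \<subseteq> all_pairs L \<and>
     Glt \<inter> Geq = {} \<and> Glt \<inter> Ggt = {} \<and> Geq \<inter> Ggt = {} \<and>
     Glt \<union> Geq \<union> Ggt = all_pairs L"

definition induced :: "'a set set \<Rightarrow> 'a set \<Rightarrow> 'a set set" where
  "induced G L' = {e \<in> G. e \<subseteq> L'}"

text \<open>Explained by a relaxed scenario. The gene tree has vertex type 'a + nat with leaf set
  exactly Inl ` L; the species tree has vertex type 'c + nat with species (colours) Inl c.\<close>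

definition explainable :: "'a set \<Rightarrow> 'a set set \<Rightarrow> 'a set set \<Rightarrow> 'a set set \<Rightarrow> ('a \<Rightarrow> 'c) \<Rightarrow> bool" where
  "explainable L Glt Geq Ggt \<sigma> \<longleftrightarrow>
     (\<exists>(VT :: ('a + nat) set) ET rT (VS :: ('c + nat) set) ES rS \<mu> \<tau>T \<tau>S.
        relaxed_scenario VT ET rT VS ES rS (case_sum (\<lambda>x. Inl (\<sigma> x)) (\<lambda>_. undefined)) \<mu> \<tau>T \<tau>S \<and>
        tree_leaves VT ET rT = Inl ` L \<and>
        Glt = {{x, y} | x y. x \<in> L \<and> y \<in> L \<and> x \<noteq> y \<and>
                 \<tau>T (lca VT ET (Inl x) (Inl y)) < \<tau>S (lca VS ES (Inl (\<sigma> x)) (Inl (\<sigma> y)))} \<and>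
        Geq = {{x, y} | x y. x \<in> L \<and> y \<in> L \<and> x \<noteq> y \<and>
                 \<tau>T (lca VT ET (Inl x) (Inl y)) = \<tau>S (lca VS ES (Inl (\<sigma> x)) (Inl (\<sigma> y)))} \<and>
        Ggt = {{x, y} | x y. x \<in> L \<and> y \<in> L \<and> x \<noteq> y \<and>
                 \<tau>T (lca VT ET (Inl x) (Inl y)) > \<tau>S (lca VS ES (Inl (\<sigma> x)) (Inl (\<sigma> y)))})"

end

theory Submission
  imports Defs
begin

locale ptree =
  fixes V :: "'v set" and E :: "('v \<times> 'v) set" and r :: 'v
  assumes pt: "planted_phylo_tree V E r"
begin

lemma finV: "finite V" and rV: "r \<in> V" and EV: "E \<subseteq> V \<times> V"
  and noin: "(u, r) \<notin> E" and par: "v \<in> V \<Longrightarrow> v \<noteq> r \<Longrightarrow> \<exists>!u. (u, v) \<in> E"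
  and reach: "v \<in> V \<Longrightarrow> (r, v) \<in> E\<^sup>*" and rch: "card (children E r) = 1"
  using pt unfolding planted_phylo_tree_def by auto

lemma trancl_V: "(u, v) \<in> E\<^sup>+ \<Longrightarrow> u \<in> V \<and> v \<in> V"
  using trancl_subset_Sigma[OF EV] by blast

lemma uniq_par: "(u, v) \<in> E \<Longrightarrow> (w, v) \<in> E \<Longrightarrow> u = w"
proof -
  assume a: "(u, v) \<in> E" "(w, v) \<in> E"
  hence "v \<in> V" "v \<noteq> r" using EV noin by auto
  thus ?thesis using par a by blast
qed

lemma acyc: "(v, v) \<notin> E\<^sup>+"
proof
  assume h: "(v, v) \<in> E\<^sup>+"
  hence "v \<in> V" using trancl_V by blast
  hence "(r, v) \<in> E\<^sup>*" by (rule reach)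
  thus False using h
  proof (induction v rule: rtrancl_induct)
    case base
    then obtain z where "(z, r) \<in> E" using tranclD2 by metis
    thus False using noin by blast
  next
    case (step u v)
    obtain z where z: "(v, z) \<in> E\<^sup>*" "(z, v) \<in> E" using tranclD2[OF step.prems] by blast
    have "z = u" using uniq_par z(2) step.hyps(2) by blast
    hence "(u, u) \<in> E\<^sup>+" using rtrancl_into_trancl2[OF step.hyps(2)] z(1) by blast
    thus False using step.IH by blast
  qed
qed

lemma antisym: "(a, b) \<in> E\<^sup>* \<Longrightarrow> (b, a) \<in> E\<^sup>* \<Longrightarrow> a = b"
  by (metis acyc rtranclD trancl_rtrancl_trancl)

lemma chain: "(a, v) \<in> E\<^sup>* \<Longrightarrow> (b, v) \<in> E\<^sup>* \<Longrightarrow> (a, b) \<in> E\<^sup>* \<or> (b, a) \<in> E\<^sup>*"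
proof (induction v arbitrary: b rule: rtrancl_induct)
  case base thus ?case by blast
next
  case (step u v)
  show ?case
  proof (cases "b = v")
    case True thus ?thesis using step.hyps by auto
  next
    case False
    then have "(b, v) \<in> E\<^sup>+" using step.prems rtranclD by metis
    then obtain z where z: "(b, z) \<in> E\<^sup>*" "(z, v) \<in> E" using tranclD2 by metis
    have "z = u" using uniq_par z(2) step.hyps(2) by blast
    thus ?thesis using step.IH z(1) by blast
  qed
qed

definition anc where "anc z = {w \<in> V. (w, z) \<in> E\<^sup>*}"

lemma fin_anc: "finite (anc z)" unfolding anc_def using finV by simp

lemma anc_mono: assumes "(z, w) \<in> E\<^sup>+" "w \<in> V" shows "anc z \<subset> anc w"
proof -
  have "anc z \<subseteq> anc w" unfolding anc_def using assms(1)
    by (auto intro: rtrancl_trans trancl_into_rtrancl)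
  moreover have "w \<in> anc w" unfolding anc_def using assms(2) by simp
  moreover have "w \<notin> anc z" unfolding anc_def using assms(1) acyc
    by (auto dest: trancl_rtrancl_trancl)
  ultimately show ?thesis by blast
qed

lemma lowest: assumes "finite P" "P \<noteq> {}" "P \<subseteq> V"
    "\<forall>a\<in>P. \<forall>b\<in>P. (a, b) \<in> E\<^sup>* \<or> (b, a) \<in> E\<^sup>*"
  shows "\<exists>z\<in>P. \<forall>w\<in>P. (w, z) \<in> E\<^sup>*"
proof -
  let ?f = "\<lambda>w. card (anc w)"
  have "Max (?f ` P) \<in> ?f ` P" using assms(1,2) by simp
  then obtain z where z: "z \<in> P" "?f z = Max (?f ` P)" by auto
  have "\<forall>w\<in>P. (w, z) \<in> E\<^sup>*"
  proof
    fix w assume w: "w \<in> P"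
    show "(w, z) \<in> E\<^sup>*"
    proof (rule ccontr)
      assume n: "(w, z) \<notin> E\<^sup>*"
      hence "(z, w) \<in> E\<^sup>*" using assms(4) w z(1) by blast
      hence "(z, w) \<in> E\<^sup>+" using n by (metis rtranclD rtrancl.rtrancl_refl)
      hence "anc z \<subset> anc w" using anc_mono w assms(3) by blast
      hence "?f z < ?f w" using fin_anc psubset_card_mono by blast
      moreover have "?f w \<le> Max (?f ` P)" using w assms(1) by simp
      ultimately show False using z(2) by simp
    qed
  qed
  thus ?thesis using z(1) by blast
qed

lemma highest: assumes "finite P" "P \<noteq> {}" "P \<subseteq> V"
    "\<forall>a\<in>P. \<forall>b\<in>P. (a, b) \<in> E\<^sup>* \<or> (b, a) \<in> E\<^sup>*"
  shows "\<exists>z\<in>P. \<forall>w\<in>P. (z, w) \<in> E\<^sup>*"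
proof -
  let ?f = "\<lambda>w. card (anc w)"
  have "Min (?f ` P) \<in> ?f ` P" using assms(1,2) by simp
  then obtain z where z: "z \<in> P" "?f z = Min (?f ` P)" by auto
  have "\<forall>w\<in>P. (z, w) \<in> E\<^sup>*"
  proof
    fix w assume w: "w \<in> P"
    show "(z, w) \<in> E\<^sup>*"
    proof (rule ccontr)
      assume n: "(z, w) \<notin> E\<^sup>*"
      hence "(w, z) \<in> E\<^sup>*" using assms(4) w z(1) by blast
      hence "(w, z) \<in> E\<^sup>+" using n by (metis rtranclD rtrancl.rtrancl_refl)
      hence "anc w \<subset> anc z" using anc_mono z(1) assms(3) by blast
      hence "?f w < ?f z" using fin_anc psubset_card_mono by blast
      moreover have "Min (?f ` P) \<le> ?f w" using w assms(1) by simp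
      ultimately show False using z(2) by simp
    qed
  qed
  thus ?thesis using z(1) by blast
qed

lemma lca_unique: assumes "is_lca V E x y z" shows "lca V E x y = z"
  unfolding lca_def
proof (rule the_equality)
  show "is_lca V E x y z" by fact
  fix z' assume "is_lca V E x y z'"
  thus "z' = z" using assms antisym unfolding is_lca_def by blast
qed

lemma lca_is: assumes "x \<in> V" "y \<in> V" shows "is_lca V E x y (lca V E x y)"
proof -
  let ?P = "{w \<in> V. (w, x) \<in> E\<^sup>* \<and> (w, y) \<in> E\<^sup>*}"
  have "r \<in> ?P" using rV reach assms by blast
  moreover have "finite ?P" using finV by simp
  moreover have "\<forall>a\<in>?P. \<forall>b\<in>?P. (a, b) \<in> E\<^sup>* \<or> (b, a) \<in> E\<^sup>*" using chain by blast
  ultimately obtain z where z: "z \<in> ?P" "\<forall>w\<in>?P. (w, z) \<in> E\<^sup>*"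
    using lowest[of ?P] by blast
  hence "is_lca V E x y z" unfolding is_lca_def by blast
  thus ?thesis using lca_unique by simp
qed

lemma leafD: "a \<in> tree_leaves V E r \<Longrightarrow> a \<in> V \<and> a \<noteq> r \<and> (\<forall>w. (a, w) \<notin> E)"
  unfolding tree_leaves_def children_def by auto

lemma leaf_desc: "a \<in> tree_leaves V E r \<Longrightarrow> (a, w) \<in> E\<^sup>* \<Longrightarrow> w = a"
  by (metis leafD converse_rtranclE)

lemma leaf_trancl: "a \<in> tree_leaves V E r \<Longrightarrow> (a, w) \<notin> E\<^sup>+"
  by (metis leafD tranclD)

lemma lca_self: "x \<in> V \<Longrightarrow> lca V E x x = x"
  by (rule lca_unique) (auto simp: is_lca_def)

lemma below_c: obtains c where "(r, c) \<in> E" "\<forall>v\<in>V. v \<noteq> r \<longrightarrow> (c, v) \<in> E\<^sup>*"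
proof -
  from rch obtain c where c: "children E r = {c}" using card_1_singletonE by blast
  hence rc: "(r, c) \<in> E" unfolding children_def by auto
  have "\<forall>v\<in>V. v \<noteq> r \<longrightarrow> (c, v) \<in> E\<^sup>*"
  proof (intro ballI impI)
    fix v assume "v \<in> V" "v \<noteq> r"
    then have "(r, v) \<in> E\<^sup>+" using reach rtranclD by metis
    then obtain z where "(r, z) \<in> E" "(z, v) \<in> E\<^sup>*" using tranclD by metis
    moreover then have "z = c" using c unfolding children_def by auto
    ultimately show "(c, v) \<in> E\<^sup>*" by simp
  qed
  thus ?thesis using that rc by blast
qed

lemma lca_ne_r: assumes "x \<in> V" "y \<in> V" "x \<noteq> r" "y \<noteq> r" shows "lca V E x y \<noteq> r"
proof
  assume h: "lca V E x y = r"
  obtain c where c: "(r, c) \<in> E" "\<forall>v\<in>V. v \<noteq> r \<longrightarrow> (c, v) \<in> E\<^sup>*" using below_c by blast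
  have cV: "c \<in> V" using c(1) EV by auto
  have "(c, lca V E x y) \<in> E\<^sup>*" using lca_is[OF assms(1,2)] c(2) assms cV unfolding is_lca_def by blast
  hence "(r, r) \<in> E\<^sup>+" using h c(1) by (metis rtrancl_into_trancl2)
  thus False using acyc by blast
qed

end

definition rK :: "'v set \<Rightarrow> ('v \<times> 'v) set \<Rightarrow> 'v \<Rightarrow> 'v set \<Rightarrow> 'v set" where
  "rK V E r A = insert r {lca V E x y | x y. x \<in> A \<and> y \<in> A}"

definition rE :: "'v set \<Rightarrow> ('v \<times> 'v) set \<Rightarrow> 'v \<Rightarrow> 'v set \<Rightarrow> ('v \<times> 'v) set" where
  "rE V E r A = {(u, v). u \<in> rK V E r A \<and> v \<in> rK V E r A \<and> (u, v) \<in> E\<^sup>+ \<and>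
      \<not> (\<exists>w\<in>rK V E r A. (u, w) \<in> E\<^sup>+ \<and> (w, v) \<in> E\<^sup>+)}"

locale rtree = ptree +
  fixes A assumes A_leaves: "A \<subseteq> tree_leaves V E r" and A_ne: "A \<noteq> {}"
begin

abbreviation "K \<equiv> rK V E r A"
abbreviation "E' \<equiv> rE V E r A"

lemma AV: "A \<subseteq> V" using A_leaves leafD by blast
lemma rA: "r \<notin> A" using A_leaves leafD by blast
lemma A_K: "A \<subseteq> K"
proof
  fix a assume "a \<in> A"
  hence "a = lca V E a a" "a \<in> A" using lca_self AV by auto
  thus "a \<in> K" unfolding rK_def by blast
qed
lemma lca_K: "x \<in> A \<Longrightarrow> y \<in> A \<Longrightarrow> lca V E x y \<in> K" unfolding rK_def by blast
lemma K_V: "K \<subseteq> V" unfolding rK_def using rV lca_is AV unfolding is_lca_def by blast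
lemma finK: "finite K" using K_V finV finite_subset by blast
lemma r_K: "r \<in> K" unfolding rK_def by simp
lemma K_cases: "v \<in> K \<Longrightarrow> v = r \<or> (\<exists>x\<in>A. \<exists>y\<in>A. v = lca V E x y)" unfolding rK_def by blast
lemma E'_tr: "(u, v) \<in> E' \<Longrightarrow> (u, v) \<in> E\<^sup>+" unfolding rE_def by blast
lemma E'_K: "(u, v) \<in> E' \<Longrightarrow> u \<in> K \<and> v \<in> K" unfolding rE_def by blast

lemma E'_rtr: "(u, v) \<in> E'\<^sup>* \<Longrightarrow> (u, v) \<in> E\<^sup>*"
proof (induction v rule: rtrancl_induct)
  case base thus ?case by simp
next
  case (step y z) thus ?case using E'_tr by (meson rtrancl_trans trancl_into_rtrancl)
qed

lemma E'_trcl: "(u, v) \<in> E'\<^sup>+ \<Longrightarrow> (u, v) \<in> E\<^sup>+"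
proof (induction v rule: trancl_induct)
  case (base y) thus ?case using E'_tr by blast
next
  case (step y z) show ?case by (rule trancl_trans[OF step.IH E'_tr[OF step.hyps(2)]])
qed

lemma K_leaf: assumes "v \<in> K" "v \<in> tree_leaves V E r" shows "v \<in> A"
proof -
  have "v \<noteq> r" using assms(2) leafD by blast
  then obtain x y where xy: "x \<in> A" "y \<in> A" "v = lca V E x y" using K_cases assms(1) by blast
  hence "(v, x) \<in> E\<^sup>*" using lca_is AV unfolding is_lca_def by blast
  hence "x = v" using leaf_desc assms(2) by blast
  thus ?thesis using xy by simp
qed

lemma parent: assumes "v \<in> K" "v \<noteq> r"
  shows "\<exists>p. (p, v) \<in> E' \<and> (\<forall>u\<in>K. (u, v) \<in> E\<^sup>+ \<longrightarrow> (u, p) \<in> E\<^sup>*)"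
proof -
  let ?P = "{u \<in> K. (u, v) \<in> E\<^sup>+}"
  have vV: "v \<in> V" using assms K_V by blast
  have "(r, v) \<in> E\<^sup>+" using reach[OF vV] assms(2) rtranclD by metis
  hence "r \<in> ?P" using r_K by blast
  have fin: "finite ?P" using finK by simp
  have PV: "?P \<subseteq> V" using K_V by blast
  have ch: "\<forall>a\<in>?P. \<forall>b\<in>?P. (a, b) \<in> E\<^sup>* \<or> (b, a) \<in> E\<^sup>*"
    using chain trancl_into_rtrancl by (metis (no_types, lifting) mem_Collect_eq)
  obtain p where p: "p \<in> ?P" "\<forall>w\<in>?P. (w, p) \<in> E\<^sup>*"
    using lowest[OF fin _ PV ch] \<open>r \<in> ?P\<close> by blast
  have "\<not> (\<exists>w\<in>K. (p, w) \<in> E\<^sup>+ \<and> (w, v) \<in> E\<^sup>+)"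
  proof
    assume "\<exists>w\<in>K. (p, w) \<in> E\<^sup>+ \<and> (w, v) \<in> E\<^sup>+"
    then obtain w where "w \<in> K" "(p, w) \<in> E\<^sup>+" "(w, v) \<in> E\<^sup>+" by blast
    hence "(w, p) \<in> E\<^sup>*" "(p, w) \<in> E\<^sup>+" using p by auto
    thus False using acyc trancl_rtrancl_trancl by metis
  qed
  hence "(p, v) \<in> E'" using p assms(1) unfolding rE_def by blast
  thus ?thesis using p by blast
qed

lemma E'_D: "(u, v) \<in> E' \<Longrightarrow> \<not> (\<exists>w\<in>K. (u, w) \<in> E\<^sup>+ \<and> (w, v) \<in> E\<^sup>+)"
  by (simp add: rE_def)

lemma E'_par_uniq: assumes "(u1, v) \<in> E'" "(u2, v) \<in> E'" shows "u1 = u2"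
proof (rule ccontr)
  assume ne: "u1 \<noteq> u2"
  have t: "(u1, v) \<in> E\<^sup>+" "(u2, v) \<in> E\<^sup>+" using E'_tr[OF assms(1)] E'_tr[OF assms(2)] .
  have k: "u1 \<in> K" "u2 \<in> K" using E'_K[OF assms(1)] E'_K[OF assms(2)] by simp_all
  have "(u1, u2) \<in> E\<^sup>* \<or> (u2, u1) \<in> E\<^sup>*"
    using chain[OF trancl_into_rtrancl[OF t(1)] trancl_into_rtrancl[OF t(2)]] .
  hence "(u1, u2) \<in> E\<^sup>+ \<or> (u2, u1) \<in> E\<^sup>+" using ne by (auto simp: rtrancl_eq_or_trancl)
  thus False
  proof
    assume "(u1, u2) \<in> E\<^sup>+" thus False using E'_D[OF assms(1)] k(2) t(2) by blast
  next
    assume "(u2, u1) \<in> E\<^sup>+" thus False using E'_D[OF assms(2)] k(1) t(1) by blast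
  qed
qed

lemma K_rtr_aux: "\<forall>v. card {w \<in> K. (w, v) \<in> E\<^sup>+} = n \<longrightarrow> u \<in> K \<longrightarrow> v \<in> K \<longrightarrow>
   (u, v) \<in> E\<^sup>* \<longrightarrow> (u, v) \<in> E'\<^sup>*"
proof (induction n rule: less_induct)
  case (less n)
  show ?case
  proof (intro allI impI)
    fix v assume c: "card {w \<in> K. (w, v) \<in> E\<^sup>+} = n" and uK: "u \<in> K" and vK: "v \<in> K"
      and uv0: "(u, v) \<in> E\<^sup>*"
    show "(u, v) \<in> E'\<^sup>*"
    proof (cases "u = v")
      case True thus ?thesis by simp
    next
      case False
      hence uv: "(u, v) \<in> E\<^sup>+" using uv0 by (auto simp: rtrancl_eq_or_trancl)
      have "v \<noteq> r" using uv noin by (metis tranclD2)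
      obtain p where p: "(p, v) \<in> E'" "\<forall>u\<in>K. (u, v) \<in> E\<^sup>+ \<longrightarrow> (u, p) \<in> E\<^sup>*"
        using parent vK \<open>v \<noteq> r\<close> by blast
      have pK: "p \<in> K" using E'_K p(1) by blast
      have up: "(u, p) \<in> E\<^sup>*" using p(2) uK uv by blast
      have pv: "(p, v) \<in> E\<^sup>+" using E'_tr p(1) by blast
      have sub: "{w \<in> K. (w, p) \<in> E\<^sup>+} \<subset> {w \<in> K. (w, v) \<in> E\<^sup>+}"
      proof -
        have "{w \<in> K. (w, p) \<in> E\<^sup>+} \<subseteq> {w \<in> K. (w, v) \<in> E\<^sup>+}"
        proof
          fix w assume "w \<in> {w \<in> K. (w, p) \<in> E\<^sup>+}"
          thus "w \<in> {w \<in> K. (w, v) \<in> E\<^sup>+}" using trancl_trans[OF _ pv] by simp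
        qed
        moreover have "p \<in> {w \<in> K. (w, v) \<in> E\<^sup>+}" using pK pv by simp
        moreover have "p \<notin> {w \<in> K. (w, p) \<in> E\<^sup>+}" using acyc[of p] by simp
        ultimately show ?thesis by blast
      qed
      have "card {w \<in> K. (w, p) \<in> E\<^sup>+} < card {w \<in> K. (w, v) \<in> E\<^sup>+}"
        using psubset_card_mono[OF _ sub] finK by simp
      hence "(u, p) \<in> E'\<^sup>*" using less.IH c uK pK up by blast
      thus ?thesis using p(1) by (rule rtrancl_into_rtrancl)
    qed
  qed
qed

lemma K_rtr: "u \<in> K \<Longrightarrow> v \<in> K \<Longrightarrow> (u, v) \<in> E\<^sup>* \<Longrightarrow> (u, v) \<in> E'\<^sup>*"
  using K_rtr_aux by blast

lemma r_child: "\<exists>m. children E' r = {m}"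
proof -
  define D where "D w = {a \<in> A. (w, a) \<in> E\<^sup>*}" for w
  let ?M = "K - {r}"
  have finA: "finite A" using AV finV finite_subset by blast
  have finD: "finite (D w)" for w unfolding D_def using finA by simp
  have "?M \<noteq> {}" using A_K A_ne rA by blast
  moreover have "finite ?M" using finK by simp
  ultimately have "Max ((\<lambda>w. card (D w)) ` ?M) \<in> (\<lambda>w. card (D w)) ` ?M" by simp
  then obtain m where m: "m \<in> ?M" "card (D m) = Max ((\<lambda>w. card (D w)) ` ?M)" by (metis (no_types, lifting) imageE)
  have mx: "\<forall>w\<in>?M. card (D w) \<le> card (D m)" using m(2) \<open>finite ?M\<close> by simp
  obtain x y where xy: "x \<in> A" "y \<in> A" "m = lca V E x y" using m(1) K_cases by blast
  have mxr: "(m, x) \<in> E\<^sup>*" using xy lca_is AV unfolding is_lca_def by blast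
  have allA: "\<forall>a\<in>A. (m, a) \<in> E\<^sup>*"
  proof (rule ccontr)
    assume "\<not> (\<forall>a\<in>A. (m, a) \<in> E\<^sup>*)"
    then obtain a where a: "a \<in> A" "(m, a) \<notin> E\<^sup>*" by blast
    let ?m' = "lca V E x a"
    have xV: "x \<in> V" and aV: "a \<in> V" using AV xy(1) a(1) by blast+
    have xr: "x \<noteq> r" and ar: "a \<noteq> r" using rA xy(1) a(1) by blast+
    have "?m' \<in> K" using lca_K xy a by blast
    moreover have "?m' \<noteq> r" by (rule lca_ne_r[OF xV aV xr ar])
    ultimately have m'M: "?m' \<in> ?M" by blast
    have "is_lca V E x a ?m'" by (rule lca_is[OF xV aV])
    hence m'x: "(?m', x) \<in> E\<^sup>*" "(?m', a) \<in> E\<^sup>*" unfolding is_lca_def by blast+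
    have "(?m', m) \<in> E\<^sup>* \<or> (m, ?m') \<in> E\<^sup>*" using chain m'x(1) mxr by blast
    thus False
    proof
      assume h: "(?m', m) \<in> E\<^sup>*"
      have "D m \<subseteq> D ?m'" unfolding D_def using rtrancl_trans[OF h] by blast
      moreover have "a \<in> D ?m'" "a \<notin> D m" unfolding D_def using a m'x(2) by auto
      ultimately have "D m \<subset> D ?m'" by blast
      hence "card (D m) < card (D ?m')" using finD psubset_card_mono by blast
      moreover have "card (D ?m') \<le> card (D m)" using mx m'M by blast
      ultimately show False by simp
    next
      assume "(m, ?m') \<in> E\<^sup>*"
      thus False using a rtrancl_trans[OF _ m'x(2)] by blast
    qed
  qed
  have mV: "m \<in> V" using m(1) K_V by blast
  have below: "\<forall>v\<in>?M. (m, v) \<in> E\<^sup>*"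
  proof
    fix v assume "v \<in> ?M"
    then obtain a b where ab: "a \<in> A" "b \<in> A" "v = lca V E a b" using K_cases by blast
    thus "(m, v) \<in> E\<^sup>*" using lca_is[of a b] AV allA mV unfolding is_lca_def by blast
  qed
  have rm: "(r, m) \<in> E\<^sup>+" using reach[OF mV] m(1) by (auto simp: rtrancl_eq_or_trancl)
  have "(r, m) \<in> E'"
  proof -
    have "\<not> (\<exists>w\<in>K. (r, w) \<in> E\<^sup>+ \<and> (w, m) \<in> E\<^sup>+)"
    proof
      assume "\<exists>w\<in>K. (r, w) \<in> E\<^sup>+ \<and> (w, m) \<in> E\<^sup>+"
      then obtain w where w: "w \<in> K" "(r, w) \<in> E\<^sup>+" "(w, m) \<in> E\<^sup>+" by blast
      hence "w \<noteq> r" using acyc by blast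
      hence "(m, w) \<in> E\<^sup>*" using below w(1) by blast
      thus False using w(3) acyc trancl_rtrancl_trancl by metis
    qed
    thus ?thesis unfolding rE_def using r_K m(1) rm by blast
  qed
  moreover have "\<forall>v. (r, v) \<in> E' \<longrightarrow> v = m"
  proof (intro allI impI)
    fix v assume rv: "(r, v) \<in> E'"
    hence vK: "v \<in> K" and rv': "(r, v) \<in> E\<^sup>+" using E'_K E'_tr by auto
    hence "v \<noteq> r" using acyc by blast
    hence "(m, v) \<in> E\<^sup>*" using below vK by blast
    show "v = m"
    proof (rule ccontr)
      assume "v \<noteq> m"
      hence "(m, v) \<in> E\<^sup>+" using \<open>(m, v) \<in> E\<^sup>*\<close> by (auto simp: rtrancl_eq_or_trancl)
      thus False using rv rm m(1) unfolding rE_def by blast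
    qed
  qed
  ultimately have "children E' r = {m}" unfolding children_def by blast
  thus ?thesis by blast
qed

lemma child_towards: assumes "v \<in> K" "x \<in> K" "(v, x) \<in> E\<^sup>+"
  shows "\<exists>q. (v, q) \<in> E' \<and> (q, x) \<in> E\<^sup>*"
proof -
  let ?Q = "{w \<in> K. (v, w) \<in> E\<^sup>+ \<and> (w, x) \<in> E\<^sup>*}"
  have "x \<in> ?Q" using assms by simp
  moreover have "finite ?Q" using finK by simp
  moreover have "?Q \<subseteq> V" using K_V by blast
  moreover have "\<forall>a\<in>?Q. \<forall>b\<in>?Q. (a, b) \<in> E\<^sup>* \<or> (b, a) \<in> E\<^sup>*" using chain by blast
  ultimately obtain q where q: "q \<in> ?Q" "\<forall>w\<in>?Q. (q, w) \<in> E\<^sup>*" using highest[of ?Q] by blast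
  have "\<not> (\<exists>w\<in>K. (v, w) \<in> E\<^sup>+ \<and> (w, q) \<in> E\<^sup>+)"
  proof
    assume "\<exists>w\<in>K. (v, w) \<in> E\<^sup>+ \<and> (w, q) \<in> E\<^sup>+"
    then obtain w where w: "w \<in> K" "(v, w) \<in> E\<^sup>+" "(w, q) \<in> E\<^sup>+" by blast
    have "(q, x) \<in> E\<^sup>*" using q(1) by simp
    hence "(w, x) \<in> E\<^sup>*" using rtrancl_trans[OF trancl_into_rtrancl[OF w(3)]] by blast
    hence "w \<in> ?Q" using w by blast
    hence "(q, w) \<in> E\<^sup>*" using q by blast
    thus False using w(3) acyc trancl_rtrancl_trancl by metis
  qed
  hence "(v, q) \<in> E'" using q(1) assms(1) unfolding rE_def by blast
  thus ?thesis using q(1) by blast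
qed

lemma two_children: assumes "v \<in> K" "v \<noteq> r" "v \<notin> A"
  shows "\<exists>q1 q2. q1 \<noteq> q2 \<and> (v, q1) \<in> E' \<and> (v, q2) \<in> E'"
proof -
  obtain x y where xy: "x \<in> A" "y \<in> A" "v = lca V E x y" using assms K_cases by blast
  have L: "is_lca V E x y v" using xy lca_is AV by blast
  have "v \<noteq> x" "v \<noteq> y" using xy assms(3) by auto
  moreover have "(v, x) \<in> E\<^sup>*" "(v, y) \<in> E\<^sup>*" using L unfolding is_lca_def by blast+
  ultimately have vx: "(v, x) \<in> E\<^sup>+" and vy: "(v, y) \<in> E\<^sup>+" by (auto simp: rtrancl_eq_or_trancl)
  obtain q1 where q1: "(v, q1) \<in> E'" "(q1, x) \<in> E\<^sup>*" using child_towards assms(1) A_K xy vx by blast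
  obtain q2 where q2: "(v, q2) \<in> E'" "(q2, y) \<in> E\<^sup>*" using child_towards assms(1) A_K xy vy by blast
  have "q1 \<noteq> q2"
  proof
    assume e: "q1 = q2"
    have q1V: "q1 \<in> V" using q1(1) E'_K K_V by blast
    have "(q1, v) \<in> E\<^sup>*" using L q1V q1(2) q2(2) e unfolding is_lca_def by blast
    moreover have "(v, q1) \<in> E\<^sup>+" using q1(1) E'_tr by blast
    ultimately show False using acyc trancl_rtrancl_trancl by metis
  qed
  thus ?thesis using q1 q2 by blast
qed

lemma leaves_eq: "tree_leaves K E' r = A"
proof
  show "tree_leaves K E' r \<subseteq> A"
  proof
    fix v assume "v \<in> tree_leaves K E' r"
    hence v: "v \<in> K" "v \<noteq> r" "children E' v = {}" unfolding tree_leaves_def by auto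
    show "v \<in> A"
    proof (rule ccontr)
      assume "v \<notin> A"
      then obtain q where "(v, q) \<in> E'" using two_children v by blast
      thus False using v(3) unfolding children_def by blast
    qed
  qed
next
  show "A \<subseteq> tree_leaves K E' r"
  proof
    fix a assume a: "a \<in> A"
    have "children E' a = {}" unfolding children_def using E'_tr leaf_trancl A_leaves a by blast
    thus "a \<in> tree_leaves K E' r" unfolding tree_leaves_def using a A_K rA by blast
  qed
qed

lemma rptree: "planted_phylo_tree K E' r"
  unfolding planted_phylo_tree_def
proof (intro conjI ballI impI allI)
  show "finite K" by (rule finK)
  show "r \<in> K" by (rule r_K)
  show "E' \<subseteq> K \<times> K" using E'_K by auto
  fix u show "(u, r) \<notin> E'"
  proof
    assume "(u, r) \<in> E'"
    hence "(u, r) \<in> E\<^sup>+" by (rule E'_tr)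
    thus False using noin by (metis tranclD2)
  qed
next
  fix v assume "v \<in> K" "v \<noteq> r"
  thus "\<exists>!u. (u, v) \<in> E'" using parent E'_par_uniq by blast
next
  fix v assume "v \<in> K"
  thus "(r, v) \<in> E'\<^sup>*" using K_rtr r_K reach K_V by blast
next
  show "card (children E' r) = 1" using r_child by auto
next
  fix v assume v: "v \<in> K" "v \<noteq> r" "children E' v \<noteq> {}"
  have "v \<notin> A"
  proof
    assume "v \<in> A"
    hence "children E' v = {}" unfolding children_def using E'_tr leaf_trancl A_leaves by blast
    thus False using v(3) by blast
  qed
  then obtain q1 q2 where q: "q1 \<noteq> q2" "(v, q1) \<in> E'" "(v, q2) \<in> E'" using two_children v by blast
  have "{q1, q2} \<subseteq> children E' v" using q unfolding children_def by blast
  moreover have "finite (children E' v)" using finK E'_K unfolding children_def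
    by (metis (no_types, lifting) finite_subset mem_Collect_eq subsetI)
  ultimately have "card {q1, q2} \<le> card (children E' v)" by (rule card_mono[rotated])
  thus "2 \<le> card (children E' v)" using q(1) by simp
qed

lemma lca_pres: assumes "x \<in> A" "y \<in> A" shows "lca K E' x y = lca V E x y"
proof (rule ptree.lca_unique[OF ptree.intro[OF rptree]])
  let ?z = "lca V E x y"
  have L: "is_lca V E x y ?z" using lca_is AV assms by blast
  have zK: "?z \<in> K" using lca_K assms by blast
  have "(?z, x) \<in> E'\<^sup>*" "(?z, y) \<in> E'\<^sup>*" using K_rtr zK A_K assms L unfolding is_lca_def by blast+
  moreover have "\<forall>w\<in>K. (w, x) \<in> E'\<^sup>* \<and> (w, y) \<in> E'\<^sup>* \<longrightarrow> (w, ?z) \<in> E'\<^sup>*"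
  proof (intro ballI impI)
    fix w assume "w \<in> K" "(w, x) \<in> E'\<^sup>* \<and> (w, y) \<in> E'\<^sup>*"
    hence "w \<in> V" "(w, x) \<in> E\<^sup>*" "(w, y) \<in> E\<^sup>*" using K_V E'_rtr by auto
    hence "(w, ?z) \<in> E\<^sup>*" using L unfolding is_lca_def by blast
    thus "(w, ?z) \<in> E'\<^sup>*" using K_rtr \<open>w \<in> K\<close> zK by blast
  qed
  ultimately show "is_lca K E' x y ?z" unfolding is_lca_def using zK by blast
qed

lemma time_pres: "time_map V E \<tau> \<Longrightarrow> time_map K E' \<tau>"
  unfolding time_map_def using E'_trcl K_V by blast

end

lemma induced_eq:
  assumes "L' \<subseteq> L" "\<forall>x\<in>L'. \<forall>y\<in>L'. c x y = c' x y"
  shows "induced {{x, y} | x y. x \<in> L \<and> y \<in> L \<and> x \<noteq> y \<and> c x y} L' =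
         {{x, y} | x y. x \<in> L' \<and> y \<in> L' \<and> x \<noteq> y \<and> c' x y}"
proof (rule set_eqI)
  fix e
  show "e \<in> induced {{x, y} | x y. x \<in> L \<and> y \<in> L \<and> x \<noteq> y \<and> c x y} L' \<longleftrightarrow>
        e \<in> {{x, y} | x y. x \<in> L' \<and> y \<in> L' \<and> x \<noteq> y \<and> c' x y}"
  proof
    assume "e \<in> induced {{x, y} | x y. x \<in> L \<and> y \<in> L \<and> x \<noteq> y \<and> c x y} L'"
    then obtain x y where h: "e = {x, y}" "x \<noteq> y" "c x y" "e \<subseteq> L'"
      unfolding induced_def by blast
    hence xy: "x \<in> L'" "y \<in> L'" by auto
    hence "c' x y" using h(3) assms(2) by simp
    thus "e \<in> {{x, y} | x y. x \<in> L' \<and> y \<in> L' \<and> x \<noteq> y \<and> c' x y}"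
      using h(1,2) xy by blast
  next
    assume "e \<in> {{x, y} | x y. x \<in> L' \<and> y \<in> L' \<and> x \<noteq> y \<and> c' x y}"
    then obtain x y where h: "e = {x, y}" "x \<noteq> y" "c' x y" "x \<in> L'" "y \<in> L'" by blast
    hence "c x y" using assms(2) by simp
    moreover have "x \<in> L" "y \<in> L" using h(4,5) assms(1) by auto
    ultimately have "e \<in> {{x, y} | x y. x \<in> L \<and> y \<in> L \<and> x \<noteq> y \<and> c x y}"
      using h(1,2) by blast
    moreover have "e \<subseteq> L'" using h by simp
    ultimately show "e \<in> induced {{x, y} | x y. x \<in> L \<and> y \<in> L \<and> x \<noteq> y \<and> c x y} L'"
      unfolding induced_def by blast
  qed
qed

theorem corollary6:
  fixes L :: "'a set" and Glt Geq Ggt :: "'a set set" and \<sigma> :: "'a \<Rightarrow> 'c"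
  assumes "finite L" and "L \<noteq> {}" and "graph_3_partition L Glt Geq Ggt"
  shows "explainable L Glt Geq Ggt \<sigma> \<longleftrightarrow>
    (\<forall>L'. L' \<subseteq> L \<and> L' \<noteq> {} \<longrightarrow>
       explainable L' (induced Glt L') (induced Geq L') (induced Ggt L') \<sigma>)"
proof
  assume "\<forall>L'. L' \<subseteq> L \<and> L' \<noteq> {} \<longrightarrow>
       explainable L' (induced Glt L') (induced Geq L') (induced Ggt L') \<sigma>"
  hence ex: "explainable L (induced Glt L) (induced Geq L) (induced Ggt L) \<sigma>" using assms(2) by blast
  have ind: "induced G L = G" if "G \<subseteq> all_pairs L" for G :: "'a set set"
    using that unfolding induced_def all_pairs_def by blast
  have "induced Glt L = Glt" "induced Geq L = Geq" "induced Ggt L = Ggt"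
    using assms(3) unfolding graph_3_partition_def by (simp_all add: ind)
  thus "explainable L Glt Geq Ggt \<sigma>" using ex by simp
next
  assume "explainable L Glt Geq Ggt \<sigma>"
  then obtain VT :: "('a + nat) set" and ET rT and VS :: "('c + nat) set" and ES rS \<mu> \<tau>T \<tau>S
    where rs: "relaxed_scenario VT ET rT VS ES rS (case_sum (\<lambda>x. Inl (\<sigma> x)) (\<lambda>_. undefined)) \<mu> \<tau>T \<tau>S"
      and lv: "tree_leaves VT ET rT = Inl ` L"
      and glt: "Glt = {{x, y} | x y. x \<in> L \<and> y \<in> L \<and> x \<noteq> y \<and>
                 \<tau>T (lca VT ET (Inl x) (Inl y)) < \<tau>S (lca VS ES (Inl (\<sigma> x)) (Inl (\<sigma> y)))}"
      and geq: "Geq = {{x, y} | x y. x \<in> L \<and> y \<in> L \<and> x \<noteq> y \<and>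
                 \<tau>T (lca VT ET (Inl x) (Inl y)) = \<tau>S (lca VS ES (Inl (\<sigma> x)) (Inl (\<sigma> y)))}"
      and ggt: "Ggt = {{x, y} | x y. x \<in> L \<and> y \<in> L \<and> x \<noteq> y \<and>
                 \<tau>T (lca VT ET (Inl x) (Inl y)) > \<tau>S (lca VS ES (Inl (\<sigma> x)) (Inl (\<sigma> y)))}"
    unfolding explainable_def by (elim exE conjE) blast
  show "\<forall>L'. L' \<subseteq> L \<and> L' \<noteq> {} \<longrightarrow>
       explainable L' (induced Glt L') (induced Geq L') (induced Ggt L') \<sigma>"
  proof (intro allI impI)
    fix L' assume L': "L' \<subseteq> L \<and> L' \<noteq> {}"
    let ?A = "Inl ` L' :: ('a + nat) set"
    have ptT: "planted_phylo_tree VT ET rT" using rs unfolding relaxed_scenario_def by blast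
    interpret R: rtree VT ET rT ?A
      by (rule rtree.intro[OF ptree.intro[OF ptT]]) (use L' lv in \<open>unfold_locales; auto\<close>)
    let ?K = "rK VT ET rT ?A" and ?E = "rE VT ET rT ?A"
    have lp: "\<forall>x\<in>L'. \<forall>y\<in>L'. lca ?K ?E (Inl x) (Inl y) = lca VT ET (Inl x) (Inl y)"
      using R.lca_pres by blast
    have rs': "relaxed_scenario ?K ?E rT VS ES rS (case_sum (\<lambda>x. Inl (\<sigma> x)) (\<lambda>_. undefined)) \<mu> \<tau>T \<tau>S"
    proof -
      have lvK: "\<forall>x\<in>?K. x \<in> tree_leaves VT ET rT \<longleftrightarrow> x \<in> ?A"
        using R.K_leaf R.A_leaves by blast
      have KV: "?K \<subseteq> VT" by (rule R.K_V)
      have c1: "planted_phylo_tree VS ES rS" using rs unfolding relaxed_scenario_def by (elim conjE) assumption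
      have c2: "time_map VT ET \<tau>T" using rs unfolding relaxed_scenario_def by (elim conjE) assumption
      have c3: "time_map VS ES \<tau>S" using rs unfolding relaxed_scenario_def by (elim conjE) assumption
      have c4: "\<forall>x\<in>tree_leaves VT ET rT. (case_sum (\<lambda>x. Inl (\<sigma> x)) (\<lambda>_. undefined)) x \<in> tree_leaves VS ES rS" using rs unfolding relaxed_scenario_def by (elim conjE) assumption
      have c5: "\<forall>x\<in>VT. \<mu> x \<in> Inl ` VS \<union> Inr ` ES" using rs unfolding relaxed_scenario_def by (elim conjE) assumption
      have c6: "\<forall>x\<in>VT. \<mu> x = Inl rS \<longleftrightarrow> x = rT" using rs unfolding relaxed_scenario_def by (elim conjE) assumption
      have c7: "\<forall>x\<in>VT. \<mu> x \<in> Inl ` tree_leaves VS ES rS \<longleftrightarrow> x \<in> tree_leaves VT ET rT" using rs unfolding relaxed_scenario_def by (elim conjE) assumption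
      have c8: "\<forall>x\<in>tree_leaves VT ET rT. \<mu> x = Inl ((case_sum (\<lambda>x. Inl (\<sigma> x)) (\<lambda>_. undefined)) x)" using rs unfolding relaxed_scenario_def by (elim conjE) assumption
      have c9: "\<forall>x\<in>VT. \<forall>v. \<mu> x = Inl v \<longrightarrow> \<tau>S v = \<tau>T x" using rs unfolding relaxed_scenario_def by (elim conjE) assumption
      have c10: "\<forall>x\<in>VT. \<forall>u v. \<mu> x = Inr (u, v) \<longrightarrow> \<tau>S v < \<tau>T x \<and> \<tau>T x < \<tau>S u" using rs unfolding relaxed_scenario_def by (elim conjE) assumption
      have LA: "tree_leaves ?K ?E rT \<subseteq> tree_leaves VT ET rT" using R.leaves_eq R.A_leaves by simp
      show ?thesis unfolding relaxed_scenario_def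
      proof (intro conjI)
        show "planted_phylo_tree ?K ?E rT" by (rule R.rptree)
        show "planted_phylo_tree VS ES rS" by (rule c1)
        show "time_map ?K ?E \<tau>T" using c2 by (rule R.time_pres)
        show "time_map VS ES \<tau>S" by (rule c3)
        show "\<forall>x\<in>tree_leaves ?K ?E rT. (case_sum (\<lambda>x. Inl (\<sigma> x)) (\<lambda>_. undefined)) x \<in> tree_leaves VS ES rS"
          using c4 LA by blast
        show "\<forall>x\<in>?K. \<mu> x \<in> Inl ` VS \<union> Inr ` ES" using c5 KV by blast
        show "\<forall>x\<in>?K. (\<mu> x = Inl rS) = (x = rT)" using c6 KV by blast
        show "\<forall>x\<in>?K. (\<mu> x \<in> Inl ` tree_leaves VS ES rS) = (x \<in> tree_leaves ?K ?E rT)"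
        proof
          fix x assume xK: "x \<in> ?K"
          have "(\<mu> x \<in> Inl ` tree_leaves VS ES rS) = (x \<in> tree_leaves VT ET rT)" using c7 xK KV by blast
          also have "\<dots> = (x \<in> ?A)" using lvK xK by blast
          also have "\<dots> = (x \<in> tree_leaves ?K ?E rT)" using R.leaves_eq by simp
          finally show "(\<mu> x \<in> Inl ` tree_leaves VS ES rS) = (x \<in> tree_leaves ?K ?E rT)" .
        qed
        show "\<forall>x\<in>tree_leaves ?K ?E rT. \<mu> x = Inl ((case_sum (\<lambda>x. Inl (\<sigma> x)) (\<lambda>_. undefined)) x)"
          using c8 LA by blast
        show "\<forall>x\<in>?K. \<forall>v. \<mu> x = Inl v \<longrightarrow> \<tau>S v = \<tau>T x" using c9 KV by blast
        show "\<forall>x\<in>?K. \<forall>u v. \<mu> x = Inr (u, v) \<longrightarrow> \<tau>S v < \<tau>T x \<and> \<tau>T x < \<tau>S u" using c10 KV by blast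
      qed
    qed
    show "explainable L' (induced Glt L') (induced Geq L') (induced Ggt L') \<sigma>"
      unfolding explainable_def
      apply (rule exI[of _ ?K], rule exI[of _ ?E], rule exI[of _ rT], rule exI[of _ VS],
             rule exI[of _ ES], rule exI[of _ rS], rule exI[of _ \<mu>], rule exI[of _ \<tau>T],
             rule exI[of _ \<tau>S])
      apply (intro conjI)
          apply (rule rs')
         apply (rule R.leaves_eq)
      unfolding glt geq ggt
        apply (rule induced_eq, use L' in blast, use lp in simp)+
      done
  qed
qed

end
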